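(* Let $\mathscr F$ be a complete set of functions $\mathscr X\to\mathbb R$ and $\mathscr H=\mathscr F^l$. Then for every distribution over $\mathscr X\times\mathscr Y$ and every $h\in\mathscr H$, $$\mathscr R_{\mathsf L_{\rm ham}}(h)-\mathscr R^*_{\mathsf L_{\rm ham}}(\mathscr H)+\mathscr M_{\mathsf L_{\rm ham}}(\mathscr H)\le 2\big(\mathscr R_{\widetilde{\mathsf L}_{\log}}(h)-\mathscr R^*_{\widetilde{\mathsf L}_{\log}}(\mathscr H)+\mathscr M_{\widetilde{\mathsf L}_{\log}}(\mathscr H)\big)^{1/2},$$ where $\widetilde{\mathsf L}_{\log}$ is the multi-label logistic loss built from the (normalized) Hamming loss.
   Context: Let $\mathscr X$ be an input space, $l\ge1$, $[l]=\{1,\dots,l\}$, $\mathscr Y=\{+1,-1\}^l$. $\mathscr F$ complete means $\{f(x):f\in\mathscr F\}=\mathbb R$ for all $x$. Hypotheses are $h\colon\mathscr X\times[l]\to\mathbb R$; $\mathscr F^l$ is the set of $h$ with $h(\cdot,i)\in\mathscr F$ for all $i$. Let $\operatorname{sign}(t)=1$ if $t\ge0$, $-1$ otherwise, and $\mathsf h(x)=(\operatorname{sign}h(x,1),\dots,\operatorname{sign}h(x,l))\in\mathscr Y$. The Hamming loss (normalized to $[0,1]$) is $\overline{\mathsf L}_{\rm ham}(y',y)=\frac1l\sum_{i=1}^l1_{y_i\ne y'_i}$ and $\mathsf L_{\rm ham}(h,x,y)=\overline{\mathsf L}_{\rm ham}(\mathsf h(x),y)$. The multi-label logistic loss is $\widetilde{\mathsf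 L}_{\log}(h,x,y)=\sum_{y'\in\mathscr Y}(1-\overline{\mathsf L}_{\rm ham}(y',y))\log\big(\sum_{y''\in\mathscr Y}e^{\sum_{i=1}^l(y''_i-y'_i)h(x,i)}\big)$. For a loss $\ell$, class $\mathscr H$ and distribution $\mathcal D$: $\mathscr R_\ell(h)=\mathbb E_{\mathcal D}[\ell(h,x,y)]$, $\mathscr R^*_\ell(\mathscr H)=\inf_{h\in\mathscr H}\mathscr R_\ell(h)$, $\mathscr M_\ell(\mathscr H)=\mathscr R^*_\ell(\mathscr H)-\mathbb E_x[\inf_{h\in\mathscr H}\mathbb E_{y\mid x}[\ell(h,x,y)]]$. *)

theory Defs
  imports "HOL-Probability.Probability"
begin

text \<open>Label space Y = {+1,-1}^l, labels as functions on [l] = {1..l} (undefined outside).\<close>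
definition labels :: "nat \<Rightarrow> (nat \<Rightarrow> real) set" where
  "labels l = PiE {1..l} (\<lambda>_. {1, -1})"

definition sgn01 :: "real \<Rightarrow> real" where
  "sgn01 t = (if t \<ge> 0 then 1 else -1)"

definition hyp_class :: "nat \<Rightarrow> ('x \<Rightarrow> real) set \<Rightarrow> ('x \<Rightarrow> nat \<Rightarrow> real) set" where
  "hyp_class l F = {h. \<forall>i\<in>{1..l}. (\<lambda>x. h x i) \<in> F}"

definition complete_fam :: "'x set \<Rightarrow> ('x \<Rightarrow> real) set \<Rightarrow> bool" where
  "complete_fam X F \<longleftrightarrow> (\<forall>x\<in>X. (\<lambda>f. f x) ` F = UNIV)"

definition pred_label :: "nat \<Rightarrow> ('x \<Rightarrow> nat \<Rightarrow> real) \<Rightarrow> 'x \<Rightarrow> (nat \<Rightarrow> real)" where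
  "pred_label l h x = (\<lambda>i\<in>{1..l}. sgn01 (h x i))"

definition ham_bar :: "nat \<Rightarrow> (nat \<Rightarrow> real) \<Rightarrow> (nat \<Rightarrow> real) \<Rightarrow> real" where
  "ham_bar l y' y = (1 / real l) * real (card {i\<in>{1..l}. y i \<noteq> y' i})"

definition ham_loss :: "nat \<Rightarrow> ('x \<Rightarrow> nat \<Rightarrow> real) \<Rightarrow> 'x \<Rightarrow> (nat \<Rightarrow> real) \<Rightarrow> real" where
  "ham_loss l h x y = ham_bar l (pred_label l h x) y"

definition log_loss :: "nat \<Rightarrow> ('x \<Rightarrow> nat \<Rightarrow> real) \<Rightarrow> 'x \<Rightarrow> (nat \<Rightarrow> real) \<Rightarrow> real" where
  "log_loss l h x y =
     (\<Sum>y'\<in>labels l. (1 - ham_bar l y' y) *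
        ln (\<Sum>y''\<in>labels l. exp (\<Sum>i=1..l. (y'' i - y' i) * h x i)))"

text \<open>A distribution on X \<times> Y is given by its X-marginal M and the conditional
  probabilities p x y = P(y | x).  Losses are nonnegative; risks are
  (extended) nonnegative integrals, viewed in ereal.\<close>
definition risk :: "'x measure \<Rightarrow> ('x \<Rightarrow> (nat \<Rightarrow> real) \<Rightarrow> real) \<Rightarrow> (nat \<Rightarrow> real) set
    \<Rightarrow> (('x \<Rightarrow> nat \<Rightarrow> real) \<Rightarrow> 'x \<Rightarrow> (nat \<Rightarrow> real) \<Rightarrow> real) \<Rightarrow> ('x \<Rightarrow> nat \<Rightarrow> real) \<Rightarrow> ereal" where
  "risk M p Y L h = enn2ereal (\<integral>\<^sup>+ x. ennreal (\<Sum>y\<in>Y. p x y * L h x y) \<partial>M)"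

definition best_risk :: "'x measure \<Rightarrow> ('x \<Rightarrow> (nat \<Rightarrow> real) \<Rightarrow> real) \<Rightarrow> (nat \<Rightarrow> real) set
    \<Rightarrow> (('x \<Rightarrow> nat \<Rightarrow> real) \<Rightarrow> 'x \<Rightarrow> (nat \<Rightarrow> real) \<Rightarrow> real) \<Rightarrow> ('x \<Rightarrow> nat \<Rightarrow> real) set \<Rightarrow> ereal" where
  "best_risk M p Y L H = (INF h\<in>H. risk M p Y L h)"

definition min_gap :: "'x measure \<Rightarrow> ('x \<Rightarrow> (nat \<Rightarrow> real) \<Rightarrow> real) \<Rightarrow> (nat \<Rightarrow> real) set
    \<Rightarrow> (('x \<Rightarrow> nat \<Rightarrow> real) \<Rightarrow> 'x \<Rightarrow> (nat \<Rightarrow> real) \<Rightarrow> real) \<Rightarrow> ('x \<Rightarrow> nat \<Rightarrow> real) set \<Rightarrow> ereal" where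
  "min_gap M p Y L H = best_risk M p Y L H -
     enn2ereal (\<integral>\<^sup>+ x. (INF h\<in>H. ennreal (\<Sum>y\<in>Y. p x y * L h x y)) \<partial>M)"

definition esqrt :: "ereal \<Rightarrow> ereal" where
  "esqrt z = (if z = \<infinity> then \<infinity> else ereal (sqrt (real_of_ereal z)))"

end

theory Submission
  imports Defs
begin


lemma labels_finite: "finite (labels l)"
  unfolding labels_def by (intro finite_PiE) auto

lemma labels_val: "y \<in> labels l \<Longrightarrow> i \<in> {1..l} \<Longrightarrow> y i = 1 \<or> y i = -1"
  unfolding labels_def by (auto simp: PiE_iff)

lemma labels_sq: "y \<in> labels l \<Longrightarrow> i \<in> {1..l} \<Longrightarrow> y i * y i = 1"
  using labels_val by force

lemma flip_mem: "i \<in> {1..l} \<Longrightarrow> y \<in> labels l \<Longrightarrow> y(i := - y i) \<in> labels l"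
  unfolding labels_def by (auto simp: PiE_iff extensional_def)

lemma sum_flip:
  assumes "i \<in> {1..l}"
  shows "(\<Sum>y\<in>labels l. f y) = (\<Sum>y\<in>labels l. f (y(i := - y i)))"
  by (rule sum.reindex_bij_witness[of _ "\<lambda>y. y(i := - y i)" "\<lambda>y. y(i := - y i)"])
     (auto simp: flip_mem[OF assms])

lemma M1: assumes "i \<in> {1..l}" shows "(\<Sum>y\<in>labels l. y i) = 0"
proof -
  have "(\<Sum>y\<in>labels l. y i) = (\<Sum>y\<in>labels l. - y i)"
    using sum_flip[OF assms, of "\<lambda>y. y i"] by simp
  then show ?thesis by (simp add: sum_negf)
qed

lemma M2: assumes "i \<in> {1..l}" "j \<in> {1..l}" "i \<noteq> j"
  shows "(\<Sum>y\<in>labels l. y i * y j) = 0"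
proof -
  have "(\<Sum>y\<in>labels l. y i * y j) = (\<Sum>y\<in>labels l. - (y i * y j))"
    using sum_flip[OF assms(1), of "\<lambda>y. y i * y j"] assms by simp
  then show ?thesis by (simp add: sum_negf)
qed

lemma card_labels: "card (labels l) = 2 ^ l"
proof -
  have "card {1, -1::real} = 2" by simp
  then show ?thesis unfolding labels_def by (simp add: card_PiE numeral_2_eq_2)
qed

lemma M2': assumes "i \<in> {1..l}" shows "(\<Sum>y\<in>labels l. y i * y i) = 2 ^ l"
proof -
  have "(\<Sum>y\<in>labels l. y i * y i) = (\<Sum>y\<in>labels l. 1)"
    using labels_sq assms by (intro sum.cong) auto
  then show ?thesis by (simp add: card_labels)
qed

lemma Mij: assumes "i \<in> {1..l}" "j \<in> {1..l}"
  shows "(\<Sum>y\<in>labels l. y i * y j) = (if i = j then 2 ^ l else 0)"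
  using M2 M2' assms by auto

lemma card_diff:
  assumes "y \<in> labels l" "z \<in> labels l"
  shows "real (card {i\<in>{1..l}. y i \<noteq> z i}) = (\<Sum>i=1..l. (1 - y i * z i) / 2)"
proof -
  have "real (card {i\<in>{1..l}. y i \<noteq> z i}) = (\<Sum>i=1..l. if y i \<noteq> z i then 1 else 0)"
  proof -
    have "{i\<in>{1..l}. y i \<noteq> z i} = {1..l} \<inter> {i. y i \<noteq> z i}" by auto
    then show ?thesis by (simp add: sum.If_cases)
  qed
  also have "\<dots> = (\<Sum>i=1..l. (1 - y i * z i) / 2)"
    apply (intro sum.cong refl)
    using labels_val[OF assms(1)] labels_val[OF assms(2)] by fastforce
  finally show ?thesis .
qed

lemma Z_prod:
  "(\<Sum>y\<in>labels l. exp (\<Sum>i=1..l. y i * g i)) = (\<Prod>i=1..l. exp (g i) + exp (- g i))"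
proof -
  have "(\<Prod>i=1..l. exp (g i) + exp (- g i)) = (\<Prod>i\<in>{1..l}. \<Sum>s\<in>{1,-1::real}. exp (s * g i))"
    by simp
  also have "\<dots> = (\<Sum>y\<in>labels l. \<Prod>i\<in>{1..l}. exp (y i * g i))"
    unfolding labels_def by (rule prod_sum_PiE) auto
  also have "\<dots> = (\<Sum>y\<in>labels l. exp (\<Sum>i=1..l. y i * g i))"
    by (simp add: exp_sum)
  finally show ?thesis ..
qed

definition mom :: "((nat \<Rightarrow> real) \<Rightarrow> real) \<Rightarrow> nat \<Rightarrow> nat \<Rightarrow> real" where
  "mom q l i = (\<Sum>y\<in>labels l. q y * y i)"

definition Lc :: "real \<Rightarrow> real" where
  "Lc u = ln (exp u + exp (- u))"

lemma sgn01_val: "sgn01 t = 1 \<or> sgn01 t = -1"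
  unfolding sgn01_def by auto

lemma pred_label_mem: "pred_label l g x \<in> labels l"
  unfolding pred_label_def labels_def using sgn01_val by auto

lemma ham_loss_eq:
  assumes "y \<in> labels l"
  shows "ham_loss l g x y = (1 / real l) * (\<Sum>i=1..l. (1 - y i * sgn01 (g x i)) / 2)"
proof -
  have "real (card {i\<in>{1..l}. y i \<noteq> pred_label l g x i}) = (\<Sum>i=1..l. (1 - y i * pred_label l g x i) / 2)"
    by (rule card_diff[OF assms pred_label_mem])
  also have "\<dots> = (\<Sum>i=1..l. (1 - y i * sgn01 (g x i)) / 2)"
    by (intro sum.cong) (auto simp: pred_label_def)
  finally show ?thesis unfolding ham_loss_def ham_bar_def by simp
qed

lemma ham_closed:
  assumes "(\<Sum>y\<in>labels l. q y) = 1"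
  shows "(\<Sum>y\<in>labels l. q y * ham_loss l g x y)
       = (1 / (2 * real l)) * (\<Sum>i=1..l. 1 - sgn01 (g x i) * mom q l i)"
proof -
  have "(\<Sum>y\<in>labels l. q y * ham_loss l g x y)
      = (\<Sum>y\<in>labels l. (1 / (2 * real l)) * (\<Sum>i=1..l. q y - sgn01 (g x i) * (q y * y i)))"
    apply (intro sum.cong refl)
    apply (simp add: ham_loss_eq sum_distrib_left)
    apply (intro sum.cong refl)
    apply (simp add: field_simps)
    done
  also have "\<dots> = (1 / (2 * real l)) * (\<Sum>i=1..l. (\<Sum>y\<in>labels l. q y) - sgn01 (g x i) * mom q l i)"
  proof -
    have "(\<Sum>y\<in>labels l. (\<Sum>i=1..l. q y - sgn01 (g x i) * (q y * y i)))
        = (\<Sum>i=1..l. (\<Sum>y\<in>labels l. q y - sgn01 (g x i) * (q y * y i)))"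
      by (rule sum.swap)
    also have "\<dots> = (\<Sum>i=1..l. (\<Sum>y\<in>labels l. q y) - sgn01 (g x i) * mom q l i)"
      by (simp add: sum_subtractf sum_distrib_left mom_def)
    finally show ?thesis by (simp add: sum_divide_distrib[symmetric])
  qed
  finally show ?thesis using assms by simp
qed

lemma ln_mult_exp: "(a::real) > 0 \<Longrightarrow> ln (a * exp b) = ln a + b"
  by (simp add: ln_mult)

lemma lnZ:
  fixes g :: "nat \<Rightarrow> real"
  assumes "y' \<in> labels l"
  shows "ln (\<Sum>y''\<in>labels l. exp (\<Sum>i=1..l. (y'' i - y' i) * g i))
       = (\<Sum>i=1..l. Lc (g i)) - (\<Sum>i=1..l. y' i * g i)"
proof -
  have "(\<Sum>y''\<in>labels l. exp (\<Sum>i=1..l. (y'' i - y' i) * g i))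
      = (\<Sum>y''\<in>labels l. exp (\<Sum>i=1..l. y'' i * g i) * exp (- (\<Sum>i=1..l. y' i * g i)))"
    by (intro sum.cong refl) (simp add: left_diff_distrib sum_subtractf exp_add[symmetric])
  also have "\<dots> = (\<Prod>i=1..l. exp (g i) + exp (- g i)) * exp (- (\<Sum>i=1..l. y' i * g i))"
    using Z_prod[where l=l and g=g] by (simp add: sum_distrib_right[symmetric])
  finally have eq: "(\<Sum>y''\<in>labels l. exp (\<Sum>i=1..l. (y'' i - y' i) * g i))
      = (\<Prod>i=1..l. exp (g i) + exp (- g i)) * exp (- (\<Sum>i=1..l. y' i * g i))" .
  have pos: "(\<Prod>i=1..l. exp (g i) + exp (- g i)) > 0"
    by (intro prod_pos) (simp add: add_pos_pos)
  have "ln ((\<Prod>i=1..l. exp (g i) + exp (- g i)) * exp (- (\<Sum>i=1..l. y' i * g i)))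
     = ln (\<Prod>i=1..l. exp (g i) + exp (- g i)) - (\<Sum>i=1..l. y' i * g i)"
    by (rule trans[OF ln_mult_exp[OF pos]]) simp
  also have "ln (\<Prod>i=1..l. exp (g i) + exp (- g i)) = (\<Sum>i=1..l. Lc (g i))"
    unfolding Lc_def by (rule ln_prod) (simp, metis add_pos_pos exp_gt_zero less_irrefl)
  finally show ?thesis using eq by simp
qed

lemma lin0:
  fixes c :: "nat \<Rightarrow> real"
  shows "(\<Sum>y'\<in>labels l. \<Sum>i=1..l. y' i * c i) = 0"
proof -
  have "(\<Sum>y'\<in>labels l. \<Sum>i=1..l. y' i * c i) = (\<Sum>i=1..l. (\<Sum>y'\<in>labels l. y' i) * c i)"
    by (subst sum.swap) (simp add: sum_distrib_right)
  also have "\<dots> = 0" by (intro sum.neutral) (simp add: M1)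
  finally show ?thesis .
qed

lemma quad:
  fixes a c :: "nat \<Rightarrow> real"
  shows "(\<Sum>y'\<in>labels l. (\<Sum>j=1..l. a j * y' j) * (\<Sum>i=1..l. y' i * c i))
       = 2 ^ l * (\<Sum>j=1..l. a j * c j)"
proof -
  have "(\<Sum>y'\<in>labels l. (\<Sum>j=1..l. a j * y' j) * (\<Sum>i=1..l. y' i * c i))
      = (\<Sum>y'\<in>labels l. \<Sum>j=1..l. \<Sum>i=1..l. (a j * c i) * (y' j * y' i))"
    by (intro sum.cong refl) (simp add: sum_product algebra_simps)
  also have "\<dots> = (\<Sum>j=1..l. \<Sum>y'\<in>labels l. \<Sum>i=1..l. (a j * c i) * (y' j * y' i))"
    by (rule sum.swap)
  also have "\<dots> = (\<Sum>j=1..l. \<Sum>i=1..l. (a j * c i) * (\<Sum>y'\<in>labels l. y' j * y' i))"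
    by (intro sum.cong refl) (simp add: sum.swap[of _ "labels l"] sum_distrib_left)
  also have "\<dots> = (\<Sum>j=1..l. \<Sum>i=1..l. (if j = i then 2 ^ l * (a j * c j) else 0))"
    by (intro sum.cong refl) (simp add: Mij)
  also have "\<dots> = (\<Sum>j=1..l. 2 ^ l * (a j * c j))"
    by (intro sum.cong refl) simp
  finally show ?thesis by (simp add: sum_distrib_left)
qed

lemma w_eq:
  assumes "l \<ge> 1" "y \<in> labels l" "y' \<in> labels l"
  shows "1 - ham_bar l y' y = 1/2 + (1 / (2 * real l)) * (\<Sum>j=1..l. y j * y' j)"
proof -
  have "ham_bar l y' y = (1 / real l) * (\<Sum>i=1..l. (1 - y i * y' i) / 2)"
    unfolding ham_bar_def using card_diff[OF assms(2,3)] by simp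
  also have "(\<Sum>i=1..l. (1 - y i * y' i) / 2) = (real l - (\<Sum>i=1..l. y i * y' i)) / 2"
    by (simp add: sum_subtractf sum_divide_distrib[symmetric])
  finally show ?thesis using assms(1) by (simp add: field_simps)
qed

lemma log_loss_eq:
  assumes "l \<ge> 1" "y \<in> labels l"
  shows "log_loss l g x y = 2 ^ (l - 1) * ((\<Sum>i=1..l. Lc (g x i)) - (1 / real l) * (\<Sum>i=1..l. y i * g x i))"
proof -
  define LZ where "LZ = (\<Sum>i=1..l. Lc (g x i))"
  define c where "c = 1 / (2 * real l)"
  define S where "S = (\<lambda>y'::nat\<Rightarrow>real. \<Sum>i=1..l. y' i * g x i)"
  define T where "T = (\<lambda>y'::nat\<Rightarrow>real. \<Sum>j=1..l. y j * y' j)"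
  have "log_loss l g x y = (\<Sum>y'\<in>labels l. (1/2 * LZ - 1/2 * S y') + (c * LZ * T y' - c * (T y' * S y')))"
    unfolding log_loss_def
    apply (intro sum.cong refl)
    apply (subst lnZ, assumption)
    apply (subst w_eq[OF assms], assumption)
    apply (simp add: LZ_def c_def S_def T_def algebra_simps)
    done
  also have "\<dots> = (\<Sum>y'\<in>labels l. 1/2 * LZ - 1/2 * S y') + (\<Sum>y'\<in>labels l. c * LZ * T y' - c * (T y' * S y'))"
    by (rule sum.distrib)
  also have "(\<Sum>y'\<in>labels l. 1/2 * LZ - 1/2 * S y') = 1/2 * LZ * 2 ^ l - 1/2 * (\<Sum>y'\<in>labels l. S y')"
    by (simp add: sum_subtractf sum_divide_distrib[symmetric] card_labels mult.commute)
  also have "(\<Sum>y'\<in>labels l. S y') = 0"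
    unfolding S_def by (rule lin0)
  also have "(\<Sum>y'\<in>labels l. c * LZ * T y' - c * (T y' * S y'))
     = c * LZ * (\<Sum>y'\<in>labels l. T y') - c * (\<Sum>y'\<in>labels l. T y' * S y')"
    by (simp add: sum_subtractf sum_distrib_left[symmetric])
  also have "(\<Sum>y'\<in>labels l. T y') = 0"
    unfolding T_def using lin0[where l=l and c=y] by (simp add: mult.commute)
  also have "(\<Sum>y'\<in>labels l. T y' * S y') = 2 ^ l * (\<Sum>j=1..l. y j * g x j)"
    unfolding T_def S_def by (rule quad)
  finally have "log_loss l g x y = 1/2 * LZ * 2 ^ l - c * 2 ^ l * (\<Sum>j=1..l. y j * g x j)"
    by simp
  moreover have "(2::real) ^ l = 2 * 2 ^ (l - 1)"
    using assms(1) by (metis Suc_diff_1 less_le_trans power_Suc zero_less_one)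
  ultimately show ?thesis unfolding LZ_def c_def using assms(1) by (simp add: field_simps)
qed

lemma log_closed:
  assumes "l \<ge> 1" "(\<Sum>y\<in>labels l. q y) = 1"
  shows "(\<Sum>y\<in>labels l. q y * log_loss l g x y)
       = 2 ^ (l - 1) * ((\<Sum>i=1..l. Lc (g x i)) - (1 / real l) * (\<Sum>i=1..l. mom q l i * g x i))"
proof -
  define K where "K = (2::real) ^ (l - 1)"
  define LZ where "LZ = (\<Sum>i=1..l. Lc (g x i))"
  have "(\<Sum>y\<in>labels l. q y * log_loss l g x y)
     = (\<Sum>y\<in>labels l. K * LZ * q y - (K / real l) * (\<Sum>i=1..l. q y * y i * g x i))"
    apply (intro sum.cong refl)
    apply (subst log_loss_eq[OF assms(1)], assumption)
    apply (simp add: sum_distrib_left algebra_simps K_def LZ_def)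
    done
  also have "\<dots> = K * LZ * (\<Sum>y\<in>labels l. q y) - (K / real l) * (\<Sum>y\<in>labels l. \<Sum>i=1..l. q y * y i * g x i)"
    by (simp add: sum_subtractf sum_distrib_left[symmetric] sum_divide_distrib[symmetric])
  also have "(\<Sum>y\<in>labels l. \<Sum>i=1..l. q y * y i * g x i) = (\<Sum>i=1..l. mom q l i * g x i)"
    unfolding mom_def by (subst sum.swap) (simp add: sum_distrib_right)
  finally show ?thesis using assms by (simp add: K_def LZ_def algebra_simps)
qed



lemma Lc_even: "Lc (- u) = Lc u"
  unfolding Lc_def by (simp add: add.commute)

lemma Lc_ge_abs: "Lc u \<ge> \<bar>u\<bar>"
proof -
  have "exp \<bar>u\<bar> \<le> exp u + exp (- u)"
    by (cases "u \<ge> 0") auto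
  then have "ln (exp \<bar>u\<bar>) \<le> ln (exp u + exp (- u))"
    by (subst ln_le_cancel_iff) (simp_all add: add_pos_pos)
  then show ?thesis unfolding Lc_def by simp
qed

lemma Lc_ge_ln2: "Lc u \<ge> ln 2"
proof -
  have "2 \<le> exp u + exp (- u)"
  proof -
    have "(exp u - 1) ^ 2 \<ge> 0" by simp
    then have "2 * exp u \<le> exp u * exp u + 1" by (simp add: power2_eq_square algebra_simps)
    then have "2 * exp u \<le> exp u * (exp u + exp (- u))"
      by (simp add: algebra_simps exp_minus)
    then show ?thesis by simp
  qed
  then show ?thesis unfolding Lc_def by (subst ln_le_cancel_iff) auto
qed

lemma lnmp: "(x::real) > 0 \<Longrightarrow> y > 0 \<Longrightarrow> ln (x * y) = ln x + ln y"
  by (simp add: ln_mult)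

lemma Lc_le: "Lc b \<le> ln 2 + b ^ 2 / 2"
proof -
  define a where "a = \<bar>b\<bar>"
  have a0: "a \<ge> 0" unfolding a_def by simp
  have "Lc b = Lc a" unfolding a_def by (cases "b \<ge> 0") (auto simp: Lc_even)
  have H: "- (2 * a) * (1/2) + ln (1 + (1/2) * (exp (2 * a) - 1)) \<le> (2 * a)\<^sup>2 / 8"
    using Hoeffdings_lemma_aux[of "2 * a" "1/2"] a0 by simp
  have e: "exp (- a) * exp (2 * a) = exp a"
    by (subst exp_add[symmetric]) simp
  have "exp a + exp (- a) = 2 * exp (- a) * (1 + (1/2) * (exp (2 * a) - 1))"
    by (simp add: right_diff_distrib distrib_left e)
  moreover have W: "1 + (1/2) * (exp (2 * a) - 1) > 0"
    by (simp add: field_simps add_pos_pos)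
  ultimately have "Lc a = ln (2 * exp (- a) * (1 + (1/2) * (exp (2 * a) - 1)))"
    unfolding Lc_def by simp
  also have "\<dots> = ln (2 * exp (- a)) + ln (1 + (1/2) * (exp (2 * a) - 1))"
    by (rule lnmp) (use W in simp_all)
  also have "ln (2 * exp (- a)) = ln 2 + (- a)"
    by (subst lnmp) auto
  finally have "Lc a = ln 2 + (- a) + ln (1 + (1/2) * (exp (2 * a) - 1))" .
  also have "\<dots> \<le> ln 2 + (2 * a)\<^sup>2 / 8" using H by simp
  also have "(2 * a)\<^sup>2 / 8 = b ^ 2 / 2" unfolding a_def by (simp add: power2_eq_square)
  finally show ?thesis using \<open>Lc b = Lc a\<close> by simp
qed

lemma amgm_aux:
  fixes K t u :: real
  assumes "K > 0" "t > 0" "u \<ge> 0"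
  shows "u \<le> (K * u ^ 2 / 2) / t + t / (2 * K)"
proof -
  have "0 \<le> (K * u - t) ^ 2" by simp
  then have "2 * t * K * u \<le> K ^ 2 * u ^ 2 + t ^ 2"
    by (simp add: power2_eq_square algebra_simps)
  then have "2 * t * K * u / (2 * t * K) \<le> (K ^ 2 * u ^ 2 + t ^ 2) / (2 * t * K)"
    using assms by (intro divide_right_mono) auto
  also have "2 * t * K * u / (2 * t * K) = u" using assms by simp
  also have "(K ^ 2 * u ^ 2 + t ^ 2) / (2 * t * K) = (K * u ^ 2 / 2) / t + t / (2 * K)"
    using assms by (simp add: field_simps power2_eq_square)
  finally show ?thesis .
qed

lemma coord:
  fixes K L t m h :: real
  assumes K: "K > 0" and L: "L \<ge> 1" and t: "t > 0"
  defines "b \<equiv> m / L"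
  defines "tt \<equiv> (if sgn01 h * m < 0 then b else h)"
  shows "0 \<le> K * (Lc h - Lc tt - b * (h - tt))"
    and "(\<bar>m\<bar> - sgn01 h * m) / (2 * L) \<le> K * (Lc h - Lc tt - b * (h - tt)) / t + t / (2 * K)"
proof -
  have "0 \<le> K * (Lc h - Lc tt - b * (h - tt)) \<and>
     (\<bar>m\<bar> - sgn01 h * m) / (2 * L) \<le> K * (Lc h - Lc tt - b * (h - tt)) / t + t / (2 * K)"
  proof (cases "sgn01 h * m < 0")
    case True
    then have tt: "tt = b" unfolding tt_def by simp
    have bh: "b * h \<le> 0"
    proof (cases "h \<ge> 0")
      case True
      then have "m < 0" using \<open>sgn01 h * m < 0\<close> by (simp add: sgn01_def)
      then have "m * h \<le> 0" using True by (simp add: mult_nonpos_nonneg)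
      then show ?thesis unfolding b_def using L by (simp add: divide_nonpos_pos)
    next
      case False
      then have "m > 0" using \<open>sgn01 h * m < 0\<close> by (simp add: sgn01_def)
      then have "m * h \<le> 0" using False by (simp add: mult_nonneg_nonpos)
      then show ?thesis unfolding b_def using L by (simp add: divide_nonpos_pos)
    qed
    have "Lc h - Lc tt - b * (h - tt) \<ge> b ^ 2 / 2"
      using Lc_ge_ln2[of h] Lc_le[of b] bh tt by (simp add: power2_eq_square algebra_simps)
    then have X: "K * (Lc h - Lc tt - b * (h - tt)) \<ge> K * b ^ 2 / 2"
      using K by (simp add: mult_left_mono)
    have "\<bar>m\<bar> - sgn01 h * m = 2 * \<bar>m\<bar>"
      using True by (cases "h \<ge> 0") (auto simp: sgn01_def)
    then have "(\<bar>m\<bar> - sgn01 h * m) / (2 * L) = \<bar>b\<bar>"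
      unfolding b_def using L by (simp only:) simp
    also have "\<bar>b\<bar> \<le> (K * \<bar>b\<bar> ^ 2 / 2) / t + t / (2 * K)"
      by (rule amgm_aux[OF K t]) simp
    also have "(K * \<bar>b\<bar> ^ 2 / 2) / t \<le> K * (Lc h - Lc tt - b * (h - tt)) / t"
      using divide_right_mono[OF X, of t] t by simp
    finally have fin: "(\<bar>m\<bar> - sgn01 h * m) / (2 * L) \<le> K * (Lc h - Lc tt - b * (h - tt)) / t + t / (2 * K)"
      by simp
    have nn: "0 \<le> K * b ^ 2 / 2" using K by simp
    show ?thesis using fin X nn by linarith
  next
    case False
    then have tt: "tt = h" unfolding tt_def by simp
    have "\<bar>m\<bar> - sgn01 h * m = 0"
      using False by (cases "h \<ge> 0") (auto simp: sgn01_def)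
    then show ?thesis using tt K t by simp
  qed
  then show "0 \<le> K * (Lc h - Lc tt - b * (h - tt))"
    and "(\<bar>m\<bar> - sgn01 h * m) / (2 * L) \<le> K * (Lc h - Lc tt - b * (h - tt)) / t + t / (2 * K)"
    by auto
qed

lemma pointwise:
  fixes l :: nat and m h :: "nat \<Rightarrow> real" and t :: real
  assumes l: "l \<ge> 1" and t: "t > 0"
  defines "tt \<equiv> (\<lambda>i. if sgn01 (h i) * m i < 0 then m i / real l else h i)"
  defines "D \<equiv> 2 ^ (l - 1) * ((\<Sum>i=1..l. Lc (h i)) - (1 / real l) * (\<Sum>i=1..l. m i * h i))
              - 2 ^ (l - 1) * ((\<Sum>i=1..l. Lc (tt i)) - (1 / real l) * (\<Sum>i=1..l. m i * tt i))"
  defines "E \<equiv> (1 / (2 * real l)) * (\<Sum>i=1..l. 1 - sgn01 (h i) * m i)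
              - (1 / (2 * real l)) * (\<Sum>i=1..l. 1 - \<bar>m i\<bar>)"
  shows "0 \<le> D" and "E \<le> D / t + t"
proof -
  define K :: real where "K = 2 ^ (l - 1)"
  have K: "K > 0" unfolding K_def by simp
  have L: "real l \<ge> 1" using l by simp
  define d where "d = (\<lambda>i. K * (Lc (h i) - Lc (tt i) - (m i / real l) * (h i - tt i)))"
  have "(\<Sum>i=1..l. d i) = (\<Sum>i=1..l. K * Lc (h i) - K * Lc (tt i) - (K / real l) * (m i * h i) + (K / real l) * (m i * tt i))"
    using L by (intro sum.cong refl) (simp add: d_def field_simps)
  also have "\<dots> = K * (\<Sum>i=1..l. Lc (h i)) - K * (\<Sum>i=1..l. Lc (tt i)) - (K / real l) * (\<Sum>i=1..l. m i * h i) + (K / real l) * (\<Sum>i=1..l. m i * tt i)"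
    by (simp add: sum.distrib sum_subtractf sum_distrib_left)
  also have "\<dots> = D"
    unfolding D_def K_def using L by (simp add: field_simps)
  finally have D: "D = (\<Sum>i=1..l. d i)" ..
  have E: "E = (\<Sum>i=1..l. (\<bar>m i\<bar> - sgn01 (h i) * m i) / (2 * real l))"
    unfolding E_def
    by (simp add: sum_divide_distrib[symmetric] sum_subtractf right_diff_distrib[symmetric] divide_simps)
  have d0: "\<And>i. 0 \<le> d i"
    unfolding d_def tt_def by (rule coord(1)[OF K L t])
  have de: "\<And>i. (\<bar>m i\<bar> - sgn01 (h i) * m i) / (2 * real l) \<le> d i / t + t / (2 * K)"
    unfolding d_def tt_def by (rule coord(2)[OF K L t])
  show "0 \<le> D" unfolding D by (intro sum_nonneg d0)
  have "E \<le> (\<Sum>i=1..l. d i / t + t / (2 * K))"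
    unfolding E by (intro sum_mono de)
  also have "\<dots> = D / t + real l * (t / (2 * K))"
    unfolding D by (simp add: sum.distrib sum_divide_distrib[symmetric])
  also have "real l * (t / (2 * K)) \<le> t"
  proof -
    have "2 * K = 2 ^ l" unfolding K_def using l
      by (metis Suc_diff_1 less_le_trans power_Suc zero_less_one)
    moreover have "real l \<le> 2 ^ l"
      using less_exp[of l] by (metis of_nat_less_imp_less less_imp_le of_nat_le_iff of_nat_numeral of_nat_power)
    ultimately have "real l \<le> 2 * K" by simp
    then have "real l * t \<le> 2 * K * t" using t by (simp add: mult_right_mono)
    then show ?thesis using K by (simp add: field_simps)
  qed
  finally show "E \<le> D / t + t" by simp
qed



lemma sgn01_meas[measurable]: "f \<in> borel_measurable M \<Longrightarrow> (\<lambda>x. sgn01 (f x)) \<in> borel_measurable M"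
  unfolding sgn01_def by measurable

lemma Lc_meas[measurable]:
  assumes [measurable]: "f \<in> borel_measurable M" shows "(\<lambda>x. Lc (f x)) \<in> borel_measurable M"
proof -
  have [measurable]: "(\<lambda>x. - f x) \<in> borel_measurable M" by simp
  show ?thesis unfolding Lc_def by measurable
qed

lemma ham_bar_bd:
  assumes "l \<ge> 1" shows "0 \<le> ham_bar l y' y" "ham_bar l y' y \<le> 1"
proof -
  have "card {i\<in>{1..l}. y i \<noteq> y' i} \<le> card {1..l}" by (intro card_mono) auto
  then have "real (card {i\<in>{1..l}. y i \<noteq> y' i}) \<le> real l" by simp
  then show "0 \<le> ham_bar l y' y" "ham_bar l y' y \<le> 1"
    unfolding ham_bar_def using assms by (auto simp: field_simps)
qed

lemma closed_nonneg:
  fixes m g :: "nat \<Rightarrow> real"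
  assumes l: "l \<ge> 1" and m: "\<And>i. i \<in> {1..l} \<Longrightarrow> \<bar>m i\<bar> \<le> 1"
  shows "0 \<le> (2::real) ^ (l - 1) * ((\<Sum>i=1..l. Lc (g i)) - (1 / real l) * (\<Sum>i=1..l. m i * g i))"
proof -
  have "(\<Sum>i=1..l. Lc (g i)) - (1 / real l) * (\<Sum>i=1..l. m i * g i) = (\<Sum>i=1..l. Lc (g i) - m i * g i / real l)"
    by (simp add: sum_subtractf sum_distrib_left sum_divide_distrib)
  also have "\<dots> \<ge> 0"
  proof (intro sum_nonneg)
    fix i assume i: "i \<in> {1..l}"
    have "m i * g i / real l \<le> \<bar>m i * g i\<bar> / real l" using l by (intro divide_right_mono) auto
    also have "\<dots> \<le> \<bar>m i * g i\<bar>"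
    proof -
      have "\<bar>m i * g i\<bar> * 1 \<le> \<bar>m i * g i\<bar> * real l" using l by (intro mult_left_mono) auto
      then show ?thesis using l by (simp add: divide_le_eq)
    qed
    also have "\<dots> \<le> \<bar>g i\<bar>" using m[OF i] by (simp add: abs_mult mult_left_le_one_le)
    also have "\<dots> \<le> Lc (g i)" by (rule Lc_ge_abs)
    finally show "0 \<le> Lc (g i) - m i * g i / real l" by simp
  qed
  finally show ?thesis by simp
qed

lemma sqrt_trick:
  fixes E D :: real
  assumes D: "D \<ge> 0" and H: "\<And>t. t > 0 \<Longrightarrow> E \<le> D / t + t"
  shows "E \<le> 2 * sqrt D"
proof (cases "D = 0")
  case True
  show ?thesis
  proof (rule ccontr)
    assume "\<not> ?thesis"
    then have "E > 0" using True by simp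
    then have "E \<le> E / 2" using H[of "E/2"] True by simp
    then show False using \<open>E > 0\<close> by simp
  qed
next
  case False
  then have s: "sqrt D > 0" using D by simp
  have "E \<le> D / sqrt D + sqrt D" by (rule H[OF s])
  also have "D / sqrt D = sqrt D" using s D by (metis real_div_sqrt)
  finally show ?thesis by simp
qed

lemma ereal_chain1:
  fixes A B c :: ereal
  assumes "ereal lo \<le> c" "c \<le> B" "B \<le> A" "A = ereal a"
  shows "A - B + (B - c) \<le> ereal (a - lo)"
  using assms by (cases B; cases c) auto

lemma ereal_chain2:
  fixes B c :: ereal
  assumes "0 \<le> c" "c \<le> B" "B \<le> ereal a" "c \<le> ereal u"
  shows "ereal (sqrt (a - u)) \<le> esqrt (ereal a - B + (B - c))"
  using assms by (cases B; cases c) (auto simp: esqrt_def)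

lemma ereal_two_mult: "ereal s \<le> X \<Longrightarrow> ereal (2 * s) \<le> 2 * X"
  by (cases X) auto

lemma ereal_inf_case: "(2::ereal) * esqrt (\<infinity> - B + (B - c)) = \<infinity>"
  by (simp add: esqrt_def)

lemma enn2ereal_mono': "(x::ennreal) \<le> y \<Longrightarrow> enn2ereal x \<le> enn2ereal y"
  by (simp add: less_eq_ennreal.rep_eq)

theorem theorem2:
  fixes l :: nat and F :: "('x \<Rightarrow> real) set" and M :: "'x measure"
    and p :: "'x \<Rightarrow> (nat \<Rightarrow> real) \<Rightarrow> real" and h :: "'x \<Rightarrow> nat \<Rightarrow> real"
  assumes "l \<ge> 1"
    and "complete_fam (space M) F"
    and "F \<subseteq> borel_measurable M"
    and "prob_space M"
    and "\<forall>y\<in>labels l. (\<lambda>x. p x y) \<in> borel_measurable M"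
    and "\<forall>x\<in>space M. \<forall>y\<in>labels l. p x y \<ge> 0"
    and "\<forall>x\<in>space M. (\<Sum>y\<in>labels l. p x y) = 1"
    and "h \<in> hyp_class l F"
  shows "risk M p (labels l) (ham_loss l) h - best_risk M p (labels l) (ham_loss l) (hyp_class l F)
           + min_gap M p (labels l) (ham_loss l) (hyp_class l F)
         \<le> 2 * esqrt (risk M p (labels l) (log_loss l) h
                       - best_risk M p (labels l) (log_loss l) (hyp_class l F)
                       + min_gap M p (labels l) (log_loss l) (hyp_class l F))"
proof -
  interpret P: prob_space M by (rule assms(4))
  have l1: "l \<ge> 1" by (rule assms(1))
  have L: "real l \<ge> 1" using l1 by simp
  have sum1: "\<And>x. x \<in> space M \<Longrightarrow> (\<Sum>y\<in>labels l. p x y) = 1" using assms(7) by auto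
  have pnn: "\<And>x y. x \<in> space M \<Longrightarrow> y \<in> labels l \<Longrightarrow> p x y \<ge> 0" using assms(6) by auto
  define H where "H = hyp_class l F"
  have hH: "h \<in> H" using assms(8) H_def by simp
  define mo where "mo = (\<lambda>x i. mom (p x) l i)"
  define Lh where "Lh = (\<lambda>x. (1 / (2 * real l)) * (\<Sum>i=1..l. 1 - \<bar>mo x i\<bar>))"
  define tt where "tt = (\<lambda>x i. if sgn01 (h x i) * mo x i < 0 then mo x i / real l else h x i)"
  define U where "U = (\<lambda>x. 2 ^ (l - 1) * ((\<Sum>i=1..l. Lc (tt x i)) - (1 / real l) * (\<Sum>i=1..l. mo x i * tt x i)))"
  define Ch where "Ch = (\<lambda>g x. \<Sum>y\<in>labels l. p x y * ham_loss l g x y)"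
  define Cl where "Cl = (\<lambda>g x. \<Sum>y\<in>labels l. p x y * log_loss l g x y)"
  have Ch_eq: "Ch g x = (1 / (2 * real l)) * (\<Sum>i=1..l. 1 - sgn01 (g x i) * mo x i)"
    if "x \<in> space M" for g x
    unfolding Ch_def mo_def by (rule ham_closed) (simp add: sum1 that)
  have Cl_eq: "Cl g x = 2 ^ (l - 1) * ((\<Sum>i=1..l. Lc (g x i)) - (1 / real l) * (\<Sum>i=1..l. mo x i * g x i))"
    if "x \<in> space M" for g x
    unfolding Cl_def mo_def by (rule log_closed[OF l1]) (simp add: sum1 that)
  have mo_bd: "\<bar>mo x i\<bar> \<le> 1" if "x \<in> space M" "i \<in> {1..l}" for x i
  proof -
    have "\<bar>mo x i\<bar> \<le> (\<Sum>y\<in>labels l. \<bar>p x y * y i\<bar>)"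
      unfolding mo_def mom_def by (rule sum_abs)
    also have "\<dots> = (\<Sum>y\<in>labels l. p x y)"
    proof (intro sum.cong refl)
      fix y assume y: "y \<in> labels l"
      have "\<bar>y i\<bar> = 1" using labels_val[OF y that(2)] by auto
      then show "\<bar>p x y * y i\<bar> = p x y" using pnn[OF that(1) y] by (simp add: abs_mult)
    qed
    finally show ?thesis using sum1[OF that(1)] by simp
  qed
  have hm: "(\<lambda>x. h x i) \<in> borel_measurable M" if "i \<in> {1..l}" for i
    using assms(8) assms(3) that unfolding hyp_class_def by auto
  have mom_m: "(\<lambda>x. mo x i) \<in> borel_measurable M" for i
    unfolding mo_def mom_def
    by (intro borel_measurable_sum borel_measurable_times measurable_const) (use assms(5) in auto)
  have tt_m: "(\<lambda>x. tt x i) \<in> borel_measurable M" if "i \<in> {1..l}" for i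
  proof -
    note [measurable] = hm[OF that] mom_m[of i]
    show ?thesis unfolding tt_def by measurable
  qed
  have Chh_m: "Ch h \<in> borel_measurable M"
  proof -
    have "(\<lambda>x. (1 / (2 * real l)) * (\<Sum>i=1..l. 1 - sgn01 (h x i) * mo x i)) \<in> borel_measurable M"
      by (intro borel_measurable_times measurable_const borel_measurable_sum borel_measurable_diff
          sgn01_meas hm mom_m) auto
    then show ?thesis by (subst measurable_cong[OF Ch_eq]) auto
  qed
  have Clh_m: "Cl h \<in> borel_measurable M"
  proof -
    have "(\<lambda>x. 2 ^ (l - 1) * ((\<Sum>i=1..l. Lc (h x i)) - (1 / real l) * (\<Sum>i=1..l. mo x i * h x i))) \<in> borel_measurable M"
      by (intro borel_measurable_times measurable_const borel_measurable_sum borel_measurable_diff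
          Lc_meas hm mom_m) auto
    then show ?thesis by (subst measurable_cong[OF Cl_eq]) auto
  qed
  have U_m: "U \<in> borel_measurable M"
    unfolding U_def
    by (intro borel_measurable_times measurable_const borel_measurable_sum borel_measurable_diff
          Lc_meas tt_m mom_m) auto
  have Lh_m: "Lh \<in> borel_measurable M"
    unfolding Lh_def
    by (intro borel_measurable_times measurable_const borel_measurable_sum borel_measurable_diff
          borel_measurable_abs mom_m) auto
  have Ch_bd: "0 \<le> Ch g x \<and> Ch g x \<le> 1" if "x \<in> space M" for g x
  proof -
    have "0 \<le> Ch g x" unfolding Ch_def
      by (intro sum_nonneg mult_nonneg_nonneg pnn[OF that]) (auto simp: ham_loss_def ham_bar_bd[OF l1])
    moreover have "Ch g x \<le> (\<Sum>y\<in>labels l. p x y * 1)" unfolding Ch_def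
      by (intro sum_mono mult_left_mono pnn[OF that]) (auto simp: ham_loss_def ham_bar_bd[OF l1])
    ultimately show ?thesis using sum1[OF that] by simp
  qed
  have Lh_bd: "0 \<le> Lh x \<and> Lh x \<le> 1" if "x \<in> space M" for x
  proof -
    have "0 \<le> (\<Sum>i=1..l. 1 - \<bar>mo x i\<bar>)" by (intro sum_nonneg) (use mo_bd[OF that] in auto)
    moreover have "(\<Sum>i=1..l. 1 - \<bar>mo x i\<bar>) \<le> (\<Sum>i=1..l. 1)" by (intro sum_mono) auto
    ultimately show ?thesis unfolding Lh_def using L by (auto simp: field_simps)
  qed
  have Lh_le: "Lh x \<le> Ch g x" if "x \<in> space M" for g x
  proof -
    have "(\<Sum>i=1..l. 1 - \<bar>mo x i\<bar>) \<le> (\<Sum>i=1..l. 1 - sgn01 (g x i) * mo x i)"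
    proof (intro sum_mono)
      fix i
      have "sgn01 (g x i) * mo x i \<le> \<bar>mo x i\<bar>" using sgn01_val[of "g x i"] by auto
      then show "1 - \<bar>mo x i\<bar> \<le> 1 - sgn01 (g x i) * mo x i" by simp
    qed
    then show ?thesis unfolding Lh_def Ch_eq[OF that] using L by (intro mult_left_mono) auto
  qed
  have Clh_nn: "0 \<le> Cl h x" if "x \<in> space M" for x
    unfolding Cl_eq[OF that] by (rule closed_nonneg[OF l1 mo_bd[OF that]])
  have U_nn: "0 \<le> U x" if "x \<in> space M" for x
    unfolding U_def by (rule closed_nonneg[OF l1 mo_bd[OF that]])
  have PW: "0 \<le> Cl h x - U x \<and> (\<forall>t>0. Ch h x - Lh x \<le> (Cl h x - U x) / t + t)" if "x \<in> space M" for x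
  proof -
    have e1: "Ch h x - Lh x = (1 / (2 * real l)) * (\<Sum>i=1..l. 1 - sgn01 (h x i) * mo x i)
              - (1 / (2 * real l)) * (\<Sum>i=1..l. 1 - \<bar>mo x i\<bar>)"
      unfolding Ch_eq[OF that] Lh_def ..
    have e2: "Cl h x - U x = 2 ^ (l - 1) * ((\<Sum>i=1..l. Lc (h x i)) - (1 / real l) * (\<Sum>i=1..l. mo x i * h x i))
              - 2 ^ (l - 1) * ((\<Sum>i=1..l. Lc (tt x i)) - (1 / real l) * (\<Sum>i=1..l. mo x i * tt x i))"
      unfolding Cl_eq[OF that] U_def ..
    show ?thesis unfolding e1 e2 tt_def
    proof (intro conjI allI impI)
      show "0 \<le> 2 ^ (l - 1) * ((\<Sum>i=1..l. Lc (h x i)) - (1 / real l) * (\<Sum>i=1..l. mo x i * h x i))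
              - 2 ^ (l - 1) * ((\<Sum>i=1..l. Lc (if sgn01 (h x i) * mo x i < 0 then mo x i / real l else h x i))
              - (1 / real l) * (\<Sum>i=1..l. mo x i * (if sgn01 (h x i) * mo x i < 0 then mo x i / real l else h x i)))"
        by (rule pointwise(1)[OF l1 zero_less_one])
      fix t :: real assume "t > 0"
      then show "(1 / (2 * real l)) * (\<Sum>i=1..l. 1 - sgn01 (h x i) * mo x i)
              - (1 / (2 * real l)) * (\<Sum>i=1..l. 1 - \<bar>mo x i\<bar>) \<le> (2 ^ (l - 1) * ((\<Sum>i=1..l. Lc (h x i)) - (1 / real l) * (\<Sum>i=1..l. mo x i * h x i))
              - 2 ^ (l - 1) * ((\<Sum>i=1..l. Lc (if sgn01 (h x i) * mo x i < 0 then mo x i / real l else h x i))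
              - (1 / real l) * (\<Sum>i=1..l. mo x i * (if sgn01 (h x i) * mo x i < 0 then mo x i / real l else h x i)))) / t + t"
        by (rule pointwise(2)[OF l1])
    qed
  qed
  have U_le: "U x \<le> Cl h x" if "x \<in> space M" for x using PW[OF that] by simp
  have inf_ham: "ennreal (Lh x) \<le> (INF g\<in>H. ennreal (Ch g x))" if "x \<in> space M" for x
    by (intro INF_greatest ennreal_leI Lh_le[OF that])
  have inf_log: "(INF g\<in>H. ennreal (Cl g x)) \<le> ennreal (U x)" if x: "x \<in> space M" for x
  proof -
    have ex: "\<forall>v. \<exists>f\<in>F. f x = v"
      using assms(2) x unfolding complete_fam_def by (metis UNIV_I imageE)
    define g where "g = (\<lambda>x' i. (SOME f. f \<in> F \<and> f x = tt x i) x')"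
    have gi: "(SOME f. f \<in> F \<and> f x = tt x i) \<in> F \<and> (SOME f. f \<in> F \<and> f x = tt x i) x = tt x i" for i
    proof -
      have "\<exists>f. f \<in> F \<and> f x = tt x i" using ex by blast
      then show ?thesis by (rule someI_ex)
    qed
    have gH: "g \<in> H" unfolding H_def hyp_class_def g_def using gi by auto
    have "Cl g x = U x" unfolding Cl_eq[OF x] U_def g_def using gi by simp
    then show ?thesis using gH by (metis INF_lower2 order_refl)
  qed
  have intCh: "integrable M (Ch h)"
    by (intro P.integrable_const_bound[where B=1] AE_I2 Chh_m) (use Ch_bd in auto)
  have intLh: "integrable M Lh"
    by (intro P.integrable_const_bound[where B=1] AE_I2 Lh_m) (use Lh_bd in auto)
  have nnCh: "(\<integral>\<^sup>+x. ennreal (Ch h x) \<partial>M) = ennreal (\<integral>x. Ch h x \<partial>M)"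
    by (rule nn_integral_eq_integral[OF intCh]) (use Ch_bd in \<open>auto intro: AE_I2\<close>)
  have nnLh: "(\<integral>\<^sup>+x. ennreal (Lh x) \<partial>M) = ennreal (\<integral>x. Lh x \<partial>M)"
    by (rule nn_integral_eq_integral[OF intLh]) (use Lh_bd in \<open>auto intro: AE_I2\<close>)
  define rA where "rA = (\<integral>x. Ch h x \<partial>M)"
  define rL where "rL = (\<integral>x. Lh x \<partial>M)"
  have rA0: "rA \<ge> 0" unfolding rA_def by (intro integral_nonneg_AE AE_I2) (use Ch_bd in auto)
  have rL0: "rL \<ge> 0" unfolding rL_def by (intro integral_nonneg_AE AE_I2) (use Lh_bd in auto)
  have risk_h: "risk M p (labels l) (ham_loss l) g = enn2ereal (\<integral>\<^sup>+x. ennreal (Ch g x) \<partial>M)" for g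
    by (simp add: risk_def Ch_def)
  have risk_l: "risk M p (labels l) (log_loss l) g = enn2ereal (\<integral>\<^sup>+x. ennreal (Cl g x) \<partial>M)" for g
    by (simp add: risk_def Cl_def)
  define B1 where "B1 = best_risk M p (labels l) (ham_loss l) (hyp_class l F)"
  define c1 where "c1 = enn2ereal (\<integral>\<^sup>+x. (INF g\<in>H. ennreal (Ch g x)) \<partial>M)"
  define B2 where "B2 = best_risk M p (labels l) (log_loss l) (hyp_class l F)"
  define c2 where "c2 = enn2ereal (\<integral>\<^sup>+x. (INF g\<in>H. ennreal (Cl g x)) \<partial>M)"
  have gap1: "min_gap M p (labels l) (ham_loss l) (hyp_class l F) = B1 - c1"
    by (simp add: min_gap_def B1_def c1_def Ch_def H_def)
  have gap2: "min_gap M p (labels l) (log_loss l) (hyp_class l F) = B2 - c2"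
    by (simp add: min_gap_def B2_def c2_def Cl_def H_def)
  have A1: "risk M p (labels l) (ham_loss l) h = ereal rA"
    by (simp add: risk_h nnCh rA_def[symmetric] rA0)
  have B1A: "B1 \<le> risk M p (labels l) (ham_loss l) h"
    unfolding B1_def best_risk_def using assms(8) by (rule INF_lower)
  have c1B: "c1 \<le> B1"
    unfolding B1_def best_risk_def H_def[symmetric]
  proof (rule INF_greatest)
    fix g assume "g \<in> H"
    then show "c1 \<le> risk M p (labels l) (ham_loss l) g"
      unfolding c1_def risk_h
      by (intro enn2ereal_mono' nn_integral_mono INF_lower)
  qed
  have c1L: "ereal rL \<le> c1"
  proof -
    have "ennreal rL \<le> (\<integral>\<^sup>+x. (INF g\<in>H. ennreal (Ch g x)) \<partial>M)"
      unfolding rL_def nnLh[symmetric] by (intro nn_integral_mono inf_ham)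
    then show ?thesis unfolding c1_def using enn2ereal_mono' rL0 by fastforce
  qed
  have LHS: "risk M p (labels l) (ham_loss l) h - B1 + (B1 - c1) \<le> ereal (rA - rL)"
    by (rule ereal_chain1[OF c1L c1B B1A A1])
  have rAL: "rA - rL = (\<integral>x. Ch h x - Lh x \<partial>M)"
    unfolding rA_def rL_def by (rule Bochner_Integration.integral_diff[OF intCh intLh, symmetric])
  have B2A: "B2 \<le> risk M p (labels l) (log_loss l) h"
    unfolding B2_def best_risk_def using assms(8) by (rule INF_lower)
  have c2B: "c2 \<le> B2"
    unfolding B2_def best_risk_def H_def[symmetric]
  proof (rule INF_greatest)
    fix g assume "g \<in> H"
    then show "c2 \<le> risk M p (labels l) (log_loss l) g"
      unfolding c2_def risk_l
      by (intro enn2ereal_mono' nn_integral_mono INF_lower)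
  qed
  have c20: "0 \<le> c2" unfolding c2_def by simp
  show ?thesis
  proof (cases "(\<integral>\<^sup>+x. ennreal (Cl h x) \<partial>M) = \<infinity>")
    case True
    then have "risk M p (labels l) (log_loss l) h = \<infinity>" by (simp add: risk_l)
    then show ?thesis unfolding gap2 using ereal_inf_case[of B2 c2] by (simp add: B2_def)
  next
    case False
    then have fin: "(\<integral>\<^sup>+x. ennreal (Cl h x) \<partial>M) < \<infinity>" by (simp add: top.not_eq_extremum)
    have intCl: "integrable M (Cl h)"
      by (intro integrableI_nonneg Clh_m AE_I2 fin) (use Clh_nn in auto)
    have intU: "integrable M U"
      by (rule Bochner_Integration.integrable_bound[OF intCl U_m]) (use U_nn U_le Clh_nn in \<open>auto intro!: AE_I2\<close>)
    have nnCl: "(\<integral>\<^sup>+x. ennreal (Cl h x) \<partial>M) = ennreal (\<integral>x. Cl h x \<partial>M)"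
      by (rule nn_integral_eq_integral[OF intCl]) (use Clh_nn in \<open>auto intro: AE_I2\<close>)
    have nnU: "(\<integral>\<^sup>+x. ennreal (U x) \<partial>M) = ennreal (\<integral>x. U x \<partial>M)"
      by (rule nn_integral_eq_integral[OF intU]) (use U_nn in \<open>auto intro: AE_I2\<close>)
    define rC where "rC = (\<integral>x. Cl h x \<partial>M)"
    define rU where "rU = (\<integral>x. U x \<partial>M)"
    have rC0: "rC \<ge> 0" unfolding rC_def by (intro integral_nonneg_AE AE_I2) (use Clh_nn in auto)
    have rU0: "rU \<ge> 0" unfolding rU_def by (intro integral_nonneg_AE AE_I2) (use U_nn in auto)
    have A2: "risk M p (labels l) (log_loss l) h = ereal rC"
      by (simp add: risk_l nnCl rC_def[symmetric] rC0)
    have c2U: "c2 \<le> ereal rU"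
    proof -
      have "(\<integral>\<^sup>+x. (INF g\<in>H. ennreal (Cl g x)) \<partial>M) \<le> ennreal rU"
        unfolding rU_def nnU[symmetric] by (intro nn_integral_mono inf_log)
      then show ?thesis unfolding c2_def using enn2ereal_mono' rU0 by fastforce
    qed
    have RHS: "ereal (sqrt (rC - rU)) \<le> esqrt (risk M p (labels l) (log_loss l) h - B2 + (B2 - c2))"
      unfolding A2 by (rule ereal_chain2[OF c20 c2B B2A[unfolded A2] c2U])
    have rCU: "rC - rU = (\<integral>x. Cl h x - U x \<partial>M)"
      unfolding rC_def rU_def by (rule Bochner_Integration.integral_diff[OF intCl intU, symmetric])
    have D0: "0 \<le> rC - rU" unfolding rCU
      by (intro integral_nonneg_AE AE_I2) (use PW in auto)
    have key: "rA - rL \<le> 2 * sqrt (rC - rU)"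
    proof (rule sqrt_trick[OF D0])
      fix t :: real assume t: "t > 0"
      have "rA - rL = (\<integral>x. Ch h x - Lh x \<partial>M)" by (rule rAL)
      also have "\<dots> \<le> (\<integral>x. (Cl h x - U x) / t + t \<partial>M)"
      proof -
        have i1: "integrable M (\<lambda>x. Ch h x - Lh x)"
          using intCh intLh by (rule Bochner_Integration.integrable_diff)
        have i2: "integrable M (\<lambda>x. (Cl h x - U x) / t + t)"
          by (intro Bochner_Integration.integrable_add integrable_divide
              Bochner_Integration.integrable_diff intCl intU P.integrable_const)
        show ?thesis by (rule Bochner_Integration.integral_mono[OF i1 i2]) (use PW t in auto)
      qed
      also have "\<dots> = (\<integral>x. Cl h x - U x \<partial>M) / t + t"
        by (simp add: Bochner_Integration.integral_add integrable_divide integrable_diff intCl intU P.prob_space)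
      finally show "rA - rL \<le> (rC - rU) / t + t" unfolding rCU .
    qed
    have "risk M p (labels l) (ham_loss l) h - B1 + (B1 - c1) \<le> ereal (2 * sqrt (rC - rU))"
      using LHS key by (meson ereal_less_eq(3) order_trans)
    also have "\<dots> \<le> 2 * esqrt (risk M p (labels l) (log_loss l) h - B2 + (B2 - c2))"
      by (rule ereal_two_mult[OF RHS])
    finally show ?thesis unfolding gap1 gap2 B1_def B2_def .
  qed
qed

end
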